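(* Consider the two-route traffic model described in the context, under assumptions (A1)–(A6) listed there. Then the system admits a unique equilibrium point $\overline{x}\in\Omega$, and $\overline{x}\in P:=\{x\in\Omega:\ 0\le x_1\le C_1,\ 0\le x_2\le C_2\}$.
   Context: Two routes $i=1,2$ connect an origin to a destination. For each route there are positive parameters $B_i$ (jam density), $C_i$ (critical density), $F_i$ (maximum capacity) with $C_i<B_i$; the traffic demand is a constant $\phi>0$. Set $v_i=F_i/C_i$ and $E_i=v_iB_i$ (virtual capacity). The state is $x=(x_1,x_2)\in\Omega:=[0,B_1]\times[0,B_2]$ and evolves by $\dot x_i=\min\{\phi R_i(x),S_i(x_i)\}-D_i(x_i)$, $i=1,2$, where $S_i(x_i)=F_i$ if $x_i<C_i$ and $S_i(x_i)=\frac{F_i}{B_i-C_i}(B_i-x_i)$ otherwise, and $D_i(x_i)=v_ix_i$ if $x_i<C_i$ and $D_i(x_i)=F_i$ otherwise. The routing ratios are $R_i(x)=(1-\alpha)r_i^0+\alpha\, r_i(\tau(x))$, where $\alpha\in(0,1]$, $r_1^0,r_2^0\ge0$ with $r_1^0+r_2^0=1$, $\tau(x)=(\tau_1(x_1),\tau_2(x_2))$ with each $\tau_i$ a $C^1$ strictly increasing function, and $0\le r_i(\tau(x))\le1$, $r_1(\tau(x))+r_2(\tau(x))=1$ on $\Omega$, with $x\mapsto r_i(\tau(x))$ globally Lipschitz and $C^1$ on $\Omega$. Assumptions: (A1) $\phi<F_1+F_2$; (A2)–(A3) the properties of $\tau_i,r_i$ just listed; (A4) strict monotonicity $\partial R_i/\partial\tau_j>0$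 for $i\ne j$; (A5) $F_i>(1-\alpha)\phi r_i^0$, $i=1,2$; (A6) $\phi<E_i$, $i=1,2$. *)

theory Defs
  imports "HOL-Analysis.Analysis"
begin

text \<open>Sending (supply) function S_i with parameters F (capacity), B (jam density),
  C (critical density).\<close>
definition supply_fn :: "real \<Rightarrow> real \<Rightarrow> real \<Rightarrow> real \<Rightarrow> real" where
  "supply_fn F B C x = (if x < C then F else F / (B - C) * (B - x))"

text \<open>Demand function D_i, with free-flow speed v = F / C.\<close>
definition demand_fn :: "real \<Rightarrow> real \<Rightarrow> real \<Rightarrow> real" where
  "demand_fn F C x = (if x < C then (F / C) * x else F)"

definition routing_ratio ::
  "real \<Rightarrow> real \<Rightarrow> (real \<Rightarrow> real \<Rightarrow> real) \<Rightarrow> (real \<Rightarrow> real) \<Rightarrow> (real \<Rightarrow> real)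
     \<Rightarrow> real \<times> real \<Rightarrow> real" where
  "routing_ratio \<alpha> r0 r \<tau>1 \<tau>2 x = (1 - \<alpha>) * r0 + \<alpha> * r (\<tau>1 (fst x)) (\<tau>2 (snd x))"

definition route_field :: "real \<Rightarrow> real \<Rightarrow> real \<Rightarrow> real \<Rightarrow> real \<Rightarrow> real \<Rightarrow> real" where
  "route_field \<phi> F B C Ri xi = min (\<phi> * Ri) (supply_fn F B C xi) - demand_fn F C xi"

end

theory Submission
  imports Defs "HOL-Analysis.Analysis"
begin

lemma deriv_mono_lemma:
  fixes f \<tau> :: "real \<Rightarrow> real"
  assumes tauC: "\<exists>d. continuous_on {0..B} d \<and> (\<forall>s\<in>{0..B}. (\<tau> has_real_derivative d s) (at s within {0..B}))"
    and smono: "strict_mono_on {0..B} \<tau>"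
    and fd: "\<forall>s\<in>{0..B}. \<exists>D>0. (f has_real_derivative D) (at (\<tau> s) within \<tau> ` {0..B})"
    and st: "0 \<le> s" "s \<le> t" "t \<le> B"
  shows "f (\<tau> s) \<le> f (\<tau> t)"
proof -
  obtain d where dd: "\<forall>s\<in>{0..B}. (\<tau> has_real_derivative d s) (at s within {0..B})"
    using tauC by blast
  have hd: "\<exists>E. ((f \<circ> \<tau>) has_real_derivative E) (at u within {0..B}) \<and> (0 < u \<longrightarrow> u < B \<longrightarrow> E \<ge> 0)"
    if u: "u \<in> {0..B}" for u
  proof -
    obtain D where D: "D > 0" "(f has_real_derivative D) (at (\<tau> u) within \<tau> ` {0..B})"
      using fd u by blast
    have c: "((f \<circ> \<tau>) has_real_derivative D * d u) (at u within {0..B})"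
      by (rule DERIV_image_chain[OF D(2)]) (use dd u in blast)
    have "d u \<ge> 0" if "0 < u" "u < B"
    proof (rule ccontr)
      assume "\<not> d u \<ge> 0"
      have "(\<tau> has_real_derivative d u) (at u)"
        using dd u that by (metis at_within_Icc_at)
      then obtain e where e: "e > 0" "\<forall>h>0. h < e \<longrightarrow> \<tau> u > \<tau> (u + h)"
        using DERIV_neg_dec_right \<open>\<not> d u \<ge> 0\<close> by (metis not_le)
      define h where "h = min (e/2) ((B - u)/2)"
      have "h > 0" "h < e" "u + h \<le> B" using e(1) that by (auto simp: h_def min_def field_simps)
      then have "\<tau> u > \<tau> (u + h)" using e by blast
      moreover have "\<tau> u < \<tau> (u + h)"
        using strict_mono_onD[OF smono, of u "u+h"] u \<open>h>0\<close> \<open>u + h \<le> B\<close> by auto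
      ultimately show False by simp
    qed
    then show ?thesis using c D(1) by (intro exI[of _ "D * d u"]) auto
  qed
  have cont: "continuous_on {0..B} (f \<circ> \<tau>)"
    unfolding continuous_on_eq_continuous_within
    using hd DERIV_continuous by blast
  have "(f \<circ> \<tau>) s \<le> (f \<circ> \<tau>) t"
  proof (rule DERIV_nonneg_imp_increasing_open[OF st(2)])
    fix x assume x: "s < x" "x < t"
    then obtain E where E: "((f \<circ> \<tau>) has_real_derivative E) (at x within {0..B})" "E \<ge> 0"
      using hd[of x] st by auto
    then have "((f \<circ> \<tau>) has_real_derivative E) (at x)"
      using x st by (metis at_within_Icc_at le_less_trans less_le_trans)
    then show "\<exists>y. ((f \<circ> \<tau>) has_real_derivative y) (at x) \<and> y \<ge> 0" using E by blast
  next
    show "continuous_on {s..t} (f \<circ> \<tau>)"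
      by (rule continuous_on_subset[OF cont]) (use st in auto)
  qed
  then show ?thesis by simp
qed
lemma eq_iff:
  fixes \<phi> F B C R x :: real
  assumes "0 < C" "C < B" "0 < F" "0 < \<phi>" "0 \<le> R" "0 \<le> x" "x \<le> B"
  shows "route_field \<phi> F B C R x = 0 \<longleftrightarrow> x = C / F * min (\<phi> * R) F"
proof (cases "x < C")
  case True
  then show ?thesis using assms
    by (auto simp: route_field_def supply_fn_def demand_fn_def field_simps)
next
  case False
  have S: "F / (B - C) * (B - x) \<le> F"
    using assms False by (auto simp: field_simps intro!: mult_left_mono)
  have Seq: "F / (B - C) * (B - x) = F \<longleftrightarrow> x = C"
    using assms False by (auto simp: field_simps)
  have "C / F * min (\<phi> * R) F \<le> C" using assms by (auto simp: field_simps min_def)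
  show ?thesis
  proof
    assume h: "route_field \<phi> F B C R x = 0"
    then have m: "min (\<phi> * R) (F / (B - C) * (B - x)) = F"
      using False by (simp add: route_field_def supply_fn_def demand_fn_def)
    then have "F / (B - C) * (B - x) = F" using S by (auto simp: min_def split: if_splits)
    then have "x = C" using Seq by blast
    moreover have "\<phi> * R \<ge> F" using m S by (auto simp: min_def split: if_splits)
    ultimately show "x = C / F * min (\<phi> * R) F" using assms by simp
  next
    assume h: "x = C / F * min (\<phi> * R) F"
    then have "x = C" using False \<open>C / F * min (\<phi> * R) F \<le> C\<close> by simp
    then have "min (\<phi> * R) F = F" using h assms by (auto simp: field_simps)
    then show "route_field \<phi> F B C R x = 0"
      using \<open>x = C\<close> assms by (simp add: route_field_def supply_fn_def demand_fn_def)
  qed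
qed
theorem theorem1:
  fixes B1 B2 C1 C2 F1 F2 \<phi> \<alpha> r01 r02 :: real
    and \<tau>1 \<tau>2 :: "real \<Rightarrow> real"
    and r1 r2 :: "real \<Rightarrow> real \<Rightarrow> real"
  defines "\<Omega> \<equiv> {0..B1} \<times> {0..B2}"
      and "R1 \<equiv> routing_ratio \<alpha> r01 r1 \<tau>1 \<tau>2"
      and "R2 \<equiv> routing_ratio \<alpha> r02 r2 \<tau>1 \<tau>2"
  assumes pos: "B1 > 0" "B2 > 0" "C1 > 0" "C2 > 0" "F1 > 0" "F2 > 0" "\<phi> > 0"
      and crit: "C1 < B1" "C2 < B2"
      and alpha: "0 < \<alpha>" "\<alpha> \<le> 1"
      and r0: "r01 \<ge> 0" "r02 \<ge> 0" "r01 + r02 = 1"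
      \<comment> \<open>(A1)\<close>
      and A1: "\<phi> < F1 + F2"
      \<comment> \<open>(A2): tau_i is C^1 and strictly increasing (on [0, B_i])\<close>
      and tau1_C1: "\<exists>d. continuous_on {0..B1} d \<and>
                       (\<forall>s\<in>{0..B1}. (\<tau>1 has_real_derivative d s) (at s within {0..B1}))"
      and tau2_C1: "\<exists>d. continuous_on {0..B2} d \<and>
                       (\<forall>s\<in>{0..B2}. (\<tau>2 has_real_derivative d s) (at s within {0..B2}))"
      and tau1_mono: "strict_mono_on {0..B1} \<tau>1"
      and tau2_mono: "strict_mono_on {0..B2} \<tau>2"
      \<comment> \<open>(A3): properties of r_i on Omega\<close>
      and r_bounds: "\<forall>x\<in>\<Omega>. 0 \<le> r1 (\<tau>1 (fst x)) (\<tau>2 (snd x)) \<and> r1 (\<tau>1 (fst x)) (\<tau>2 (snd x)) \<le> 1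
                        \<and> 0 \<le> r2 (\<tau>1 (fst x)) (\<tau>2 (snd x)) \<and> r2 (\<tau>1 (fst x)) (\<tau>2 (snd x)) \<le> 1"
      and r_sum: "\<forall>x\<in>\<Omega>. r1 (\<tau>1 (fst x)) (\<tau>2 (snd x)) + r2 (\<tau>1 (fst x)) (\<tau>2 (snd x)) = 1"
      and r1_lip: "\<exists>L. lipschitz_on L \<Omega> (\<lambda>x. r1 (\<tau>1 (fst x)) (\<tau>2 (snd x)))"
      and r2_lip: "\<exists>L. lipschitz_on L \<Omega> (\<lambda>x. r2 (\<tau>1 (fst x)) (\<tau>2 (snd x)))"
      and r1_C1: "\<exists>g :: real \<times> real \<Rightarrow> real \<times> real. continuous_on \<Omega> g \<and>
                    (\<forall>x\<in>\<Omega>. ((\<lambda>y. r1 (\<tau>1 (fst y)) (\<tau>2 (snd y))) has_derivative (\<lambda>h. g x \<bullet> h))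
                               (at x within \<Omega>))"
      and r2_C1: "\<exists>g :: real \<times> real \<Rightarrow> real \<times> real. continuous_on \<Omega> g \<and>
                    (\<forall>x\<in>\<Omega>. ((\<lambda>y. r2 (\<tau>1 (fst y)) (\<tau>2 (snd y))) has_derivative (\<lambda>h. g x \<bullet> h))
                               (at x within \<Omega>))"
      \<comment> \<open>(A4): dR_1/dtau_2 > 0 and dR_2/dtau_1 > 0\<close>
      and A4_1: "\<forall>x\<in>\<Omega>. \<exists>d>0. ((\<lambda>t. (1 - \<alpha>) * r01 + \<alpha> * r1 (\<tau>1 (fst x)) t) has_real_derivative d)
                              (at (\<tau>2 (snd x)) within \<tau>2 ` {0..B2})"
      and A4_2: "\<forall>x\<in>\<Omega>. \<exists>d>0. ((\<lambda>t. (1 - \<alpha>) * r02 + \<alpha> * r2 t (\<tau>2 (snd x))) has_real_derivative d)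
                              (at (\<tau>1 (fst x)) within \<tau>1 ` {0..B1})"
      \<comment> \<open>(A5)\<close>
      and A5: "F1 > (1 - \<alpha>) * \<phi> * r01" "F2 > (1 - \<alpha>) * \<phi> * r02"
      \<comment> \<open>(A6): phi < E_i = v_i B_i\<close>
      and A6: "\<phi> < (F1 / C1) * B1" "\<phi> < (F2 / C2) * B2"
  shows "\<exists>xbar\<in>\<Omega>.
           route_field \<phi> F1 B1 C1 (R1 xbar) (fst xbar) = 0 \<and>
           route_field \<phi> F2 B2 C2 (R2 xbar) (snd xbar) = 0 \<and>
           (\<forall>y\<in>\<Omega>. route_field \<phi> F1 B1 C1 (R1 y) (fst y) = 0 \<and>
                    route_field \<phi> F2 B2 C2 (R2 y) (snd y) = 0 \<longrightarrow> y = xbar) \<and>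
           0 \<le> fst xbar \<and> fst xbar \<le> C1 \<and> 0 \<le> snd xbar \<and> snd xbar \<le> C2"
proof -
  have Om: "x \<in> \<Omega> \<longleftrightarrow> fst x \<in> {0..B1} \<and> snd x \<in> {0..B2}" for x
    by (cases x) (auto simp: \<Omega>_def)
  have R1e: "R1 x = (1-\<alpha>)*r01 + \<alpha> * r1 (\<tau>1 (fst x)) (\<tau>2 (snd x))" for x
    unfolding R1_def routing_ratio_def ..
  have R2e: "R2 x = (1-\<alpha>)*r02 + \<alpha> * r2 (\<tau>1 (fst x)) (\<tau>2 (snd x))" for x
    unfolding R2_def routing_ratio_def ..
  have Rsum: "R1 x + R2 x = 1" if "x \<in> \<Omega>" for x
  proof -
    have "R1 x + R2 x = (1-\<alpha>)*(r01+r02) + \<alpha>*(r1 (\<tau>1 (fst x)) (\<tau>2 (snd x)) + r2 (\<tau>1 (fst x)) (\<tau>2 (snd x)))"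
      by (simp add: R1e R2e algebra_simps)
    then show ?thesis using r_sum r0 that by simp
  qed
  have Rnn: "0 \<le> R1 x \<and> 0 \<le> R2 x" if "x \<in> \<Omega>" for x
    using r_bounds that alpha r0 unfolding R1e R2e
    by (auto intro!: add_nonneg_nonneg mult_nonneg_nonneg)
  define g1 where "g1 x = C1/F1 * min (\<phi> * R1 x) F1" for x
  define g2 where "g2 x = C2/F2 * min (\<phi> * R2 x) F2" for x
  have eqv: "(route_field \<phi> F1 B1 C1 (R1 x) (fst x) = 0 \<and> route_field \<phi> F2 B2 C2 (R2 x) (snd x) = 0)
      \<longleftrightarrow> x = (g1 x, g2 x)" if "x \<in> \<Omega>" for x
    using eq_iff[of C1 B1 F1 \<phi> "R1 x" "fst x"] eq_iff[of C2 B2 F2 \<phi> "R2 x" "snd x"]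
      Rnn[OF that] Om[of x] that pos crit
    by (cases x) (auto simp: g1_def g2_def)
  have gle: "0 \<le> g1 x \<and> g1 x \<le> C1 \<and> 0 \<le> g2 x \<and> g2 x \<le> C2" if "x \<in> \<Omega>" for x
    using Rnn[OF that] pos by (auto simp: g1_def g2_def field_simps min_def)
  have cR1: "continuous_on \<Omega> R1"
  proof -
    obtain L where "lipschitz_on L \<Omega> (\<lambda>x. r1 (\<tau>1 (fst x)) (\<tau>2 (snd x)))" using r1_lip by blast
    then have c: "continuous_on \<Omega> (\<lambda>x. r1 (\<tau>1 (fst x)) (\<tau>2 (snd x)))"
      by (rule lipschitz_on_continuous_on)
    have "R1 = (\<lambda>x. (1-\<alpha>)*r01 + \<alpha> * r1 (\<tau>1 (fst x)) (\<tau>2 (snd x)))" by (rule ext) (simp add: R1e)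
    then show ?thesis using c by (simp add: continuous_intros)
  qed
  have cR2: "continuous_on \<Omega> R2"
  proof -
    obtain L where "lipschitz_on L \<Omega> (\<lambda>x. r2 (\<tau>1 (fst x)) (\<tau>2 (snd x)))" using r2_lip by blast
    then have c: "continuous_on \<Omega> (\<lambda>x. r2 (\<tau>1 (fst x)) (\<tau>2 (snd x)))"
      by (rule lipschitz_on_continuous_on)
    have "R2 = (\<lambda>x. (1-\<alpha>)*r02 + \<alpha> * r2 (\<tau>1 (fst x)) (\<tau>2 (snd x)))" by (rule ext) (simp add: R2e)
    then show ?thesis using c by (simp add: continuous_intros)
  qed
  have cG: "continuous_on \<Omega> (\<lambda>x. (g1 x, g2 x))"
    unfolding g1_def g2_def by (intro continuous_intros cR1 cR2)
  have img: "(\<lambda>x. (g1 x, g2 x)) \<in> \<Omega> \<rightarrow> \<Omega>"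
    using gle crit Om by fastforce
  have cpt: "compact \<Omega>" "convex \<Omega>" "\<Omega> \<noteq> {}"
    using pos by (auto simp: \<Omega>_def compact_Times convex_Times)
  obtain xb where xb: "xb \<in> \<Omega>" "(g1 xb, g2 xb) = xb"
    using brouwer[OF cpt cG img] by blast
  have M1: "R1 (a, s) \<le> R1 (a, t)" if "a \<in> {0..B1}" "0 \<le> s" "s \<le> t" "t \<le> B2" for a s t
  proof -
    have "\<forall>s\<in>{0..B2}. \<exists>D>0. ((\<lambda>t. (1 - \<alpha>) * r01 + \<alpha> * r1 (\<tau>1 a) t) has_real_derivative D)
              (at (\<tau>2 s) within \<tau>2 ` {0..B2})"
    proof
      fix s assume "s \<in> {0..B2}"
      then have "(a, s) \<in> \<Omega>" using that Om by simp
      then show "\<exists>D>0. ((\<lambda>t. (1 - \<alpha>) * r01 + \<alpha> * r1 (\<tau>1 a) t) has_real_derivative D)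
              (at (\<tau>2 s) within \<tau>2 ` {0..B2})" using A4_1 by fastforce
    qed
    from deriv_mono_lemma[OF tau2_C1 tau2_mono this that(2-4)] show ?thesis by (simp add: R1e)
  qed
  have M2: "R2 (s, b) \<le> R2 (t, b)" if "b \<in> {0..B2}" "0 \<le> s" "s \<le> t" "t \<le> B1" for b s t
  proof -
    have "\<forall>s\<in>{0..B1}. \<exists>D>0. ((\<lambda>t. (1 - \<alpha>) * r02 + \<alpha> * r2 t (\<tau>2 b)) has_real_derivative D)
              (at (\<tau>1 s) within \<tau>1 ` {0..B1})"
    proof
      fix s assume "s \<in> {0..B1}"
      then have "(s, b) \<in> \<Omega>" using that Om by simp
      then show "\<exists>D>0. ((\<lambda>t. (1 - \<alpha>) * r02 + \<alpha> * r2 t (\<tau>2 b)) has_real_derivative D)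
              (at (\<tau>1 s) within \<tau>1 ` {0..B1})" using A4_2 by fastforce
    qed
    from deriv_mono_lemma[OF tau1_C1 tau1_mono this that(2-4)] show ?thesis by (simp add: R2e)
  qed
  have g1mono: "g1 y \<le> g1 x" if "R1 y \<le> R1 x" for x y
    proof -
    have "\<phi> * R1 y \<le> \<phi> * R1 x" using that pos by (simp add: mult_left_mono)
    then have "min (\<phi> * R1 y) F1 \<le> min (\<phi> * R1 x) F1" by (simp add: min.mono)
    then show ?thesis unfolding g1_def using pos by (simp add: mult_left_mono divide_right_mono)
  qed
  have g2mono: "g2 y \<le> g2 x" if "R2 y \<le> R2 x" for x y
    proof -
    have "\<phi> * R2 y \<le> \<phi> * R2 x" using that pos by (simp add: mult_left_mono)
    then have "min (\<phi> * R2 y) F2 \<le> min (\<phi> * R2 x) F2" by (simp add: min.mono)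
    then show ?thesis unfolding g2_def using pos by (simp add: mult_left_mono divide_right_mono)
  qed
  have key: "\<not> R1 x > R1 y" if "x \<in> \<Omega>" "y \<in> \<Omega>" "x = (g1 x, g2 x)" "y = (g1 y, g2 y)" for x y
  proof
    assume gt: "R1 x > R1 y"
    have "fst y \<le> fst x" using g1mono[of y x] gt that by (metis fst_conv less_imp_le)
    have "R2 x < R2 y" using gt Rsum that by (metis add.commute add_less_cancel_left le_less not_le)
    then have "snd x \<le> snd y" using g2mono[of x y] that by (metis snd_conv less_imp_le)
    have xy: "(fst y, snd x) \<in> \<Omega>" using that Om by auto
    have "R1 x = 1 - R2 (fst x, snd x)" using Rsum[OF that(1)] by simp
    also have "\<dots> \<le> 1 - R2 (fst y, snd x)"
      using M2[of "snd x" "fst y" "fst x"] that Om \<open>fst y \<le> fst x\<close> by auto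
    also have "\<dots> = R1 (fst y, snd x)" using Rsum[OF xy] by simp
    also have "\<dots> \<le> R1 (fst y, snd y)"
      using M1[of "fst y" "snd x" "snd y"] that Om \<open>snd x \<le> snd y\<close> by auto
    finally show False using gt by simp
  qed
  have fx: "xb = (g1 xb, g2 xb)" using xb by simp
  show ?thesis
  proof (intro bexI[OF _ xb(1)] conjI ballI impI)
    show "route_field \<phi> F1 B1 C1 (R1 xb) (fst xb) = 0" "route_field \<phi> F2 B2 C2 (R2 xb) (snd xb) = 0"
      using eqv[OF xb(1)] fx by auto
  next
    fix y assume y: "y \<in> \<Omega>" "route_field \<phi> F1 B1 C1 (R1 y) (fst y) = 0 \<and> route_field \<phi> F2 B2 C2 (R2 y) (snd y) = 0"
    then have fy: "y = (g1 y, g2 y)" using eqv by blast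
    have "R1 y = R1 xb" using key[OF y(1) xb(1) fy fx] key[OF xb(1) y(1) fx fy] by simp
    moreover have "R2 y = R2 xb" using calculation Rsum[OF y(1)] Rsum[OF xb(1)] by simp
    ultimately show "y = xb" using fx fy unfolding g1_def g2_def by (metis)
  next
    show "0 \<le> fst xb" "fst xb \<le> C1" "0 \<le> snd xb" "snd xb \<le> C2"
      using gle[OF xb(1)] fx by (metis fst_conv snd_conv)+
  qed
qed

end
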